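(* Let $\mathcal{G}:H\rtimes G\rightrightarrows G$ be a Lie 2-group with Lie 2-algebra $\mathfrak{G}:\mathfrak{h}\rtimes\mathfrak{g}\rightrightarrows\mathfrak{g}$ given by the crossed module $\phi:\mathfrak{h}\to\mathfrak{g}$. Then the groupoid $\mathfrak{G}^*:(\mathfrak{h}\rtimes\mathfrak{g})^*\rightrightarrows\mathfrak{h}^*$, with group structure given by vector addition and with the Lie–Poisson structure on $(\mathfrak{h}\rtimes\mathfrak{g})^*$, is a Poisson 2-group.
   Context: A Lie 2-group is a groupoid object in the category of Lie groups; it is described by a crossed module of Lie groups, with arrow group $H\rtimes G$ (where $H=\ker\mathtt{s}$) and object group $G$. Its Lie 2-algebra is the action groupoid $\mathfrak{h}\rtimes\mathfrak{g}\rightrightarrows\mathfrak{g}$ of the crossed module of Lie algebras $\phi:\mathfrak{h}\to\mathfrak{g}$, with source $(a,x)\mapsto x$ and target $(a,x)\mapsto\phi(a)+x$. The groupoid $\mathfrak{G}^*$ has arrows $(\mathfrak{h}\rtimes\mathfrak{g})^*\cong\mathfrak{h}^*\times\mathfrak{g}^*$, objects $\mathfrak{h}^*$, source $\mathtt{s}(\alpha,\theta)=\alpha-\phi^*(\theta)$, target $\mathtt{t}(\alpha,\theta)=\alpha$, and multiplication $(\alpha,\theta)\cdot(\alpha-\phi^*\theta,\theta')=(\alpha,\theta+\theta')$ (the action groupoid of $\mathfrak{g}^*$ acting on $\mathfrak{h}^*$ by translations via $-\phi^*$, with source and target reversed). The Lie–Poisson structure on the dual $\mathfrak{k}^*$ of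 a Lie algebra $\mathfrak{k}$ is $\{f,g\}(\xi)=\langle\xi,[df_\xi,dg_\xi]\rangle$. A Poisson groupoid is a Lie groupoid with a Poisson structure on its arrows whose multiplication graph is coisotropic in $M_1\times M_1\times\overline{M_1}$; a Poisson 2-group is a Lie 2-group that is a Poisson groupoid and whose arrow group is a Poisson–Lie group with the same bivector. *)

theory Defs
  imports "HOL-Analysis.Analysis"
begin

text \<open>All vector spaces are finite-dimensional real spaces, modelled by types
of class euclidean_space. The dual of such a space V is identified with V itself through the
inner product, so a covector at a point is a vector, the differential of a function at a point
is its gradient, and the dual map of a linear map is its adjoint.\<close>

definition grad :: "('a::euclidean_space \<Rightarrow> real) \<Rightarrow> 'a \<Rightarrow> 'a" where
  "grad f x = (\<Sum>b\<in>Basis. frechet_derivative f (at x) b *\<^sub>R b)"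

coinductive smooth_fun :: "('a::euclidean_space \<Rightarrow> real) \<Rightarrow> bool" where
  "(\<forall>x. f differentiable (at x)) \<Longrightarrow>
   (\<forall>b\<in>Basis. smooth_fun (\<lambda>x. frechet_derivative f (at x) b)) \<Longrightarrow> smooth_fun f"

definition lie_algebra :: "('a::euclidean_space \<Rightarrow> 'a \<Rightarrow> 'a) \<Rightarrow> bool" where
  "lie_algebra br \<longleftrightarrow> bilinear br \<and> (\<forall>x. br x x = 0) \<and>
     (\<forall>x y z. br x (br y z) + br y (br z x) + br z (br x y) = 0)"

definition crossed_module ::
  "('h::euclidean_space \<Rightarrow> 'h \<Rightarrow> 'h) \<Rightarrow> ('g::euclidean_space \<Rightarrow> 'g \<Rightarrow> 'g) \<Rightarrow> ('h \<Rightarrow> 'g)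
   \<Rightarrow> ('g \<Rightarrow> 'h \<Rightarrow> 'h) \<Rightarrow> bool" where
  "crossed_module bh bg \<phi> \<rho> \<longleftrightarrow>
     lie_algebra bh \<and> lie_algebra bg \<and>
     linear \<phi> \<and> (\<forall>a b. \<phi> (bh a b) = bg (\<phi> a) (\<phi> b)) \<and>
     bilinear \<rho> \<and>
     (\<forall>x y a. \<rho> (bg x y) a = \<rho> x (\<rho> y a) - \<rho> y (\<rho> x a)) \<and>
     (\<forall>x a b. \<rho> x (bh a b) = bh (\<rho> x a) b + bh a (\<rho> x b)) \<and>
     (\<forall>x a. \<phi> (\<rho> x a) = bg x (\<phi> a)) \<and>
     (\<forall>a b. \<rho> (\<phi> a) b = bh a b)"

definition semidirect_bracket ::
  "('h::euclidean_space \<Rightarrow> 'h \<Rightarrow> 'h) \<Rightarrow> ('g::euclidean_space \<Rightarrow> 'g \<Rightarrow> 'g) \<Rightarrow> ('g \<Rightarrow> 'h \<Rightarrow> 'h)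
   \<Rightarrow> 'h \<times> 'g \<Rightarrow> 'h \<times> 'g \<Rightarrow> 'h \<times> 'g" where
  "semidirect_bracket bh bg \<rho> u v =
     (bh (fst u) (fst v) + \<rho> (snd u) (fst v) - \<rho> (snd v) (fst u), bg (snd u) (snd v))"

text \<open>Bivector fields: P x is a bilinear form on covectors at x. Induced bracket of functions.\<close>
definition pbracket :: "('a::euclidean_space \<Rightarrow> 'a \<Rightarrow> 'a \<Rightarrow> real)
    \<Rightarrow> ('a \<Rightarrow> real) \<Rightarrow> ('a \<Rightarrow> real) \<Rightarrow> 'a \<Rightarrow> real" where
  "pbracket P f g x = P x (grad f x) (grad g x)"

text \<open>Lie-Poisson bivector on the dual k* (identified with k): {f,g}(xi) = <xi,[df_xi,dg_xi]>.\<close>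
definition lie_poisson :: "('k::euclidean_space \<Rightarrow> 'k \<Rightarrow> 'k) \<Rightarrow> 'k \<Rightarrow> 'k \<Rightarrow> 'k \<Rightarrow> real" where
  "lie_poisson br \<xi> u v = \<xi> \<bullet> br u v"

definition poisson_structure :: "('a::euclidean_space \<Rightarrow> 'a \<Rightarrow> 'a \<Rightarrow> real) \<Rightarrow> bool" where
  "poisson_structure P \<longleftrightarrow>
     (\<forall>x. bilinear (P x) \<and> (\<forall>u v. P x u v = - P x v u)) \<and>
     (\<forall>f g. smooth_fun f \<and> smooth_fun g \<longrightarrow> smooth_fun (pbracket P f g)) \<and>
     (\<forall>f g h. smooth_fun f \<and> smooth_fun g \<and> smooth_fun h \<longrightarrow>
        (\<forall>x. pbracket P f (pbracket P g h) x + pbracket P g (pbracket P h f) x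
              + pbracket P h (pbracket P f g) x = 0))"

text \<open>Product Poisson structure on M \<times> M, and on M \<times> M \<times> M-bar (opposite structure on the
third factor).\<close>
definition prod_bivector :: "('a::euclidean_space \<Rightarrow> 'a \<Rightarrow> 'a \<Rightarrow> real)
    \<Rightarrow> 'a \<times> 'a \<Rightarrow> 'a \<times> 'a \<Rightarrow> 'a \<times> 'a \<Rightarrow> real" where
  "prod_bivector P x u v = P (fst x) (fst u) (fst v) + P (snd x) (snd u) (snd v)"

definition triple_bar_bivector :: "('a::euclidean_space \<Rightarrow> 'a \<Rightarrow> 'a \<Rightarrow> real)
    \<Rightarrow> 'a \<times> 'a \<times> 'a \<Rightarrow> 'a \<times> 'a \<times> 'a \<Rightarrow> 'a \<times> 'a \<times> 'a \<Rightarrow> real" where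
  "triple_bar_bivector P x u v =
     P (fst x) (fst u) (fst v) + P (fst (snd x)) (fst (snd u)) (fst (snd v))
     - P (snd (snd x)) (snd (snd u)) (snd (snd v))"

definition coisotropic :: "('a::euclidean_space \<Rightarrow> 'a \<Rightarrow> 'a \<Rightarrow> real) \<Rightarrow> 'a set \<Rightarrow> bool" where
  "coisotropic P C \<longleftrightarrow>
     (\<forall>f g. smooth_fun f \<and> smooth_fun g \<and> (\<forall>c\<in>C. f c = 0) \<and> (\<forall>c\<in>C. g c = 0) \<longrightarrow>
        (\<forall>c\<in>C. pbracket P f g c = 0))"

definition poisson_map :: "('a::euclidean_space \<Rightarrow> 'a \<Rightarrow> 'a \<Rightarrow> real)
    \<Rightarrow> ('b::euclidean_space \<Rightarrow> 'b \<Rightarrow> 'b \<Rightarrow> real) \<Rightarrow> ('a \<Rightarrow> 'b) \<Rightarrow> bool" where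
  "poisson_map P Q F \<longleftrightarrow>
     (\<forall>f g. smooth_fun f \<and> smooth_fun g \<longrightarrow>
        (\<forall>x. pbracket P (f \<circ> F) (g \<circ> F) x = pbracket Q f g (F x)))"

text \<open>A Lie groupoid M1 \<rightrightarrows> M0 (arrows 'r, objects 'o, both vector spaces) with source s,
target t, unit e, multiplication m (defined on composable pairs, s p = t q) and inverse i,
which is a Lie 2-group for the additive group structures: all structure maps are
(smooth) group homomorphisms, i.e. linear; s and t are submersions (surjective linear).\<close>
definition linear_lie_2group ::
  "('r::euclidean_space \<Rightarrow> 'o::euclidean_space) \<Rightarrow> ('r \<Rightarrow> 'o) \<Rightarrow> ('o \<Rightarrow> 'r)
   \<Rightarrow> ('r \<Rightarrow> 'r \<Rightarrow> 'r) \<Rightarrow> ('r \<Rightarrow> 'r) \<Rightarrow> bool" where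
  "linear_lie_2group s t e m i \<longleftrightarrow>
     (\<forall>p q. s p = t q \<longrightarrow> s (m p q) = s q \<and> t (m p q) = t p) \<and>
     (\<forall>p q r. s p = t q \<and> s q = t r \<longrightarrow> m (m p q) r = m p (m q r)) \<and>
     (\<forall>x. s (e x) = x \<and> t (e x) = x) \<and>
     (\<forall>p. m (e (t p)) p = p \<and> m p (e (s p)) = p) \<and>
     (\<forall>p. s (i p) = t p \<and> t (i p) = s p \<and> m p (i p) = e (t p) \<and> m (i p) p = e (s p)) \<and>
     linear s \<and> linear t \<and> linear e \<and> linear i \<and> surj s \<and> surj t \<and>
     (\<forall>p q p' q'. s p = t q \<and> s p' = t q' \<longrightarrow> m (p + p') (q + q') = m p q + m p' q') \<and>
     (\<forall>c p q. s p = t q \<longrightarrow> m (c *\<^sub>R p) (c *\<^sub>R q) = c *\<^sub>R m p q)"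

text \<open>Poisson 2-group: Lie 2-group which is a Poisson groupoid (Poisson structure P on the arrows,
graph of multiplication coisotropic in M1 \<times> M1 \<times> M1-bar) and whose arrow group (vector addition)
is a Poisson-Lie group with the same bivector (addition is a Poisson map).\<close>
definition linear_poisson_2group ::
  "('r::euclidean_space \<Rightarrow> 'o::euclidean_space) \<Rightarrow> ('r \<Rightarrow> 'o) \<Rightarrow> ('o \<Rightarrow> 'r)
   \<Rightarrow> ('r \<Rightarrow> 'r \<Rightarrow> 'r) \<Rightarrow> ('r \<Rightarrow> 'r) \<Rightarrow> ('r \<Rightarrow> 'r \<Rightarrow> 'r \<Rightarrow> real) \<Rightarrow> bool" where
  "linear_poisson_2group s t e m i P \<longleftrightarrow>
     linear_lie_2group s t e m i \<and>
     poisson_structure P \<and>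
     coisotropic (triple_bar_bivector P) {(p, q, m p q) | p q. s p = t q} \<and>
     poisson_map (prod_bivector P) P (\<lambda>pq. fst pq + snd pq)"

end

theory Submission
  imports Defs
begin


lemma smooth_D:
  assumes "smooth_fun f" shows "(f has_derivative frechet_derivative f (at y)) (at y)"
  using assms by (cases rule: smooth_fun.cases) (auto simp: frechet_derivative_works)

lemma smooth_diff: "smooth_fun f \<Longrightarrow> f differentiable (at y)"
  by (erule smooth_fun.cases) auto

lemma smooth_pd:
  assumes "smooth_fun f" "b \<in> Basis" shows "smooth_fun (\<lambda>y. frechet_derivative f (at y) b)"
  using assms by (cases rule: smooth_fun.cases) auto

inductive G :: "('a::euclidean_space \<Rightarrow> real) \<Rightarrow> bool" where
  G_smooth: "smooth_fun f \<Longrightarrow> G f"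
| G_const: "G (\<lambda>x. c)"
| G_lin: "linear l \<Longrightarrow> G l"
| G_add: "G f \<Longrightarrow> G g \<Longrightarrow> G (\<lambda>x. f x + g x)"
| G_mult: "G f \<Longrightarrow> G g \<Longrightarrow> G (\<lambda>x. f x * g x)"

lemma G_step:
  assumes "G f"
  shows "(\<forall>x. \<exists>L. (f has_derivative L) (at x)) \<and> (\<forall>b\<in>Basis. G (\<lambda>x. frechet_derivative f (at x) b))"
  using assms
proof induction
  case (G_smooth f)
  then show ?case by (auto intro: smooth_D G.G_smooth smooth_pd)
next
  case (G_const c)
  have "\<And>x. frechet_derivative (\<lambda>x. c) (at x) = (\<lambda>_. 0)"
    by (rule frechet_derivative_at[symmetric]) auto
  then show ?case by (auto intro: G.G_const has_derivative_const)
next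
  case (G_lin l)
  then have bl: "bounded_linear l" using linear_conv_bounded_linear by blast
  have "\<And>x. frechet_derivative l (at x) = l"
    by (rule frechet_derivative_at[symmetric]) (rule bounded_linear_imp_has_derivative[OF bl])
  then show ?case using bounded_linear_imp_has_derivative[OF bl] by (auto intro: G.G_const)
next
  case (G_add f g)
  have d: "\<And>x. ((\<lambda>x. f x + g x) has_derivative (\<lambda>h. frechet_derivative f (at x) h + frechet_derivative g (at x) h)) (at x)"
    using G_add.IH by (intro has_derivative_add) (auto simp: frechet_derivative_works[symmetric] differentiable_def)
  then have "\<And>x. frechet_derivative (\<lambda>x. f x + g x) (at x) = (\<lambda>h. frechet_derivative f (at x) h + frechet_derivative g (at x) h)"
    by (rule frechet_derivative_at[symmetric])
  then show ?case using d G_add.IH by (auto intro!: G.G_add)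
next
  case (G_mult f g)
  have d: "\<And>x. ((\<lambda>x. f x * g x) has_derivative (\<lambda>h. f x * frechet_derivative g (at x) h + frechet_derivative f (at x) h * g x)) (at x)"
    using G_mult.IH by (intro has_derivative_mult) (auto simp: frechet_derivative_works[symmetric] differentiable_def)
  then have "\<And>x. frechet_derivative (\<lambda>x. f x * g x) (at x) = (\<lambda>h. f x * frechet_derivative g (at x) h + frechet_derivative f (at x) h * g x)"
    by (rule frechet_derivative_at[symmetric])
  then show ?case using d G_mult.IH G_mult.hyps
    by (auto intro!: G.G_add G.G_mult)
qed

lemma G_smooth_fun: "G f \<Longrightarrow> smooth_fun f"
proof (coinduction arbitrary: f rule: smooth_fun.coinduct)
  case (smooth_fun f)
  then show ?case using G_step[OF smooth_fun] by (auto simp: differentiable_def)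
qed

lemma G_sum: "finite A \<Longrightarrow> (\<And>i. i \<in> A \<Longrightarrow> G (f i)) \<Longrightarrow> G (\<lambda>x. \<Sum>i\<in>A. f i x)"
  by (induction A rule: finite_induct) (auto intro: G.intros)



lemma path_deriv:
  fixes f :: "'a::euclidean_space \<Rightarrow> real"
  assumes "\<forall>y. (f has_derivative F y) (at y)"
  shows "((\<lambda>s. f (x + s *\<^sub>R u)) has_derivative (\<lambda>h. h * F (x + s *\<^sub>R u) u)) (at s within S)"
proof -
  have lin: "linear (F (x + s *\<^sub>R u))" using assms has_derivative_linear by blast
  have i: "((\<lambda>s. x + s *\<^sub>R u) has_derivative (\<lambda>h. h *\<^sub>R u)) (at s within S)"
    by (auto intro!: derivative_eq_intros)
  have "((\<lambda>s. f (x + s *\<^sub>R u)) has_derivative (\<lambda>h. F (x + s *\<^sub>R u) (h *\<^sub>R u))) (at s within S)"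
    using has_derivative_compose[OF i] assms by blast
  moreover have "(\<lambda>h. F (x + s *\<^sub>R u) (h *\<^sub>R u)) = (\<lambda>h. h * F (x + s *\<^sub>R u) u)"
    using linear_scale[OF lin] by auto
  ultimately show ?thesis by simp
qed

lemma mvt_line:
  fixes f :: "'a::euclidean_space \<Rightarrow> real"
  assumes "\<forall>y. (f has_derivative F y) (at y)" "0 < t"
  shows "\<exists>\<sigma>\<in>{0<..<t}. f (x + t *\<^sub>R u) - f x = t * F (x + \<sigma> *\<^sub>R u) u"
proof -
  have "\<exists>\<sigma>\<in>{0<..<t}. f (x + t *\<^sub>R u) - f (x + 0 *\<^sub>R u) = (t - 0) * F (x + \<sigma> *\<^sub>R u) u"
    by (rule mvt_simple[OF assms(2), of "\<lambda>s. f (x + s *\<^sub>R u)" "\<lambda>s h. h * F (x + s *\<^sub>R u) u"])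
       (rule path_deriv[OF assms(1)])
  then show ?thesis by simp
qed

lemma mvt2:
  fixes f :: "'a::euclidean_space \<Rightarrow> real"
  assumes f: "\<forall>y. (f has_derivative F y) (at y)"
    and A: "\<forall>y. ((\<lambda>y. F y u) has_derivative GA y) (at y)" and t: "0 < t"
  shows "\<exists>\<sigma> \<rho>. 0 < \<sigma> \<and> \<sigma> < t \<and> 0 < \<rho> \<and> \<rho> < t \<and>
    f (x + t *\<^sub>R u + t *\<^sub>R v) - f (x + t *\<^sub>R u) - f (x + t *\<^sub>R v) + f x = t * t * GA (x + \<sigma> *\<^sub>R u + \<rho> *\<^sub>R v) v"
proof -
  define \<phi> where "\<phi> s = f (x + s *\<^sub>R u + t *\<^sub>R v) - f (x + s *\<^sub>R u)" for s
  have d1: "((\<lambda>s. f (x + t *\<^sub>R v + s *\<^sub>R u)) has_derivative (\<lambda>h. h * F (x + t *\<^sub>R v + s *\<^sub>R u) u)) (at s within S)" for s S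
    by (rule path_deriv[OF f])
  have d2: "((\<lambda>s. f (x + s *\<^sub>R u)) has_derivative (\<lambda>h. h * F (x + s *\<^sub>R u) u)) (at s within S)" for s S
    by (rule path_deriv[OF f])
  have d: "(\<phi> has_derivative (\<lambda>h. h * (F (x + s *\<^sub>R u + t *\<^sub>R v) u - F (x + s *\<^sub>R u) u))) (at s within S)" for s S
  proof -
    have "((\<lambda>s. f (x + t *\<^sub>R v + s *\<^sub>R u) - f (x + s *\<^sub>R u)) has_derivative
      (\<lambda>h. h * F (x + t *\<^sub>R v + s *\<^sub>R u) u - h * F (x + s *\<^sub>R u) u)) (at s within S)"
      by (rule has_derivative_diff[OF d1 d2])
    then show ?thesis unfolding \<phi>_def by (simp add: algebra_simps)
  qed
  obtain \<sigma> where \<sigma>: "\<sigma> \<in> {0<..<t}" and e1: "\<phi> t - \<phi> 0 = (t - 0) * (F (x + \<sigma> *\<^sub>R u + t *\<^sub>R v) u - F (x + \<sigma> *\<^sub>R u) u)"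
    using mvt_simple[OF t, of \<phi> "\<lambda>s h. h * (F (x + s *\<^sub>R u + t *\<^sub>R v) u - F (x + s *\<^sub>R u) u)"] d by blast
  obtain \<rho> where \<rho>: "\<rho> \<in> {0<..<t}" and e2: "F (x + \<sigma> *\<^sub>R u + t *\<^sub>R v) u - F (x + \<sigma> *\<^sub>R u) u = t * GA (x + \<sigma> *\<^sub>R u + \<rho> *\<^sub>R v) v"
    using mvt_line[OF A t, of "x + \<sigma> *\<^sub>R u" v] by auto
  have "f (x + t *\<^sub>R u + t *\<^sub>R v) - f (x + t *\<^sub>R u) - f (x + t *\<^sub>R v) + f x = \<phi> t - \<phi> 0"
    unfolding \<phi>_def by simp
  also have "\<dots> = t * t * GA (x + \<sigma> *\<^sub>R u + \<rho> *\<^sub>R v) v" using e1 e2 by simp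
  finally show ?thesis using \<sigma> \<rho> by auto
qed



lemma sym2:
  fixes f :: "'a::euclidean_space \<Rightarrow> real"
  assumes f: "\<forall>y. (f has_derivative F y) (at y)"
    and A: "\<forall>y. ((\<lambda>y. F y u) has_derivative GA y) (at y)"
    and B: "\<forall>y. ((\<lambda>y. F y v) has_derivative GB y) (at y)"
    and cA: "continuous (at x) (\<lambda>y. GA y v)" and cB: "continuous (at x) (\<lambda>y. GB y u)"
    and nu: "norm u = 1" and nv: "norm v = 1"
  shows "GA x v = GB x u"
proof (rule ccontr)
  assume ne: "GA x v \<noteq> GB x u"
  define e where "e = \<bar>GA x v - GB x u\<bar> / 2"
  have e: "e > 0" using ne by (simp add: e_def)
  obtain d1 where d1: "d1 > 0" "\<forall>y. dist y x < d1 \<longrightarrow> dist (GA y v) (GA x v) < e"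
    using cA e unfolding continuous_at_eps_delta by blast
  obtain d2 where d2: "d2 > 0" "\<forall>y. dist y x < d2 \<longrightarrow> dist (GB y u) (GB x u) < e"
    using cB e unfolding continuous_at_eps_delta by blast
  define t where "t = min d1 d2 / 2"
  have t: "t > 0" using d1 d2 by (simp add: t_def)
  obtain \<sigma> \<rho> where s1: "0 < \<sigma>" "\<sigma> < t" "0 < \<rho>" "\<rho> < t"
    and e1: "f (x + t *\<^sub>R u + t *\<^sub>R v) - f (x + t *\<^sub>R u) - f (x + t *\<^sub>R v) + f x = t * t * GA (x + \<sigma> *\<^sub>R u + \<rho> *\<^sub>R v) v"
    using mvt2[OF f A t, of x v] by blast
  obtain \<sigma>' \<rho>' where s2: "0 < \<sigma>'" "\<sigma>' < t" "0 < \<rho>'" "\<rho>' < t"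
    and e2: "f (x + t *\<^sub>R v + t *\<^sub>R u) - f (x + t *\<^sub>R v) - f (x + t *\<^sub>R u) + f x = t * t * GB (x + \<sigma>' *\<^sub>R v + \<rho>' *\<^sub>R u) u"
    using mvt2[OF f B t, of x u] by blast
  have "x + t *\<^sub>R v + t *\<^sub>R u = x + t *\<^sub>R u + t *\<^sub>R v" by (simp add: algebra_simps)
  with e1 e2 have "t * t * GA (x + \<sigma> *\<^sub>R u + \<rho> *\<^sub>R v) v = t * t * GB (x + \<sigma>' *\<^sub>R v + \<rho>' *\<^sub>R u) u"
    by (simp add: algebra_simps)
  then have eq: "GA (x + \<sigma> *\<^sub>R u + \<rho> *\<^sub>R v) v = GB (x + \<sigma>' *\<^sub>R v + \<rho>' *\<^sub>R u) u"
    using t by simp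
  have "dist (x + \<sigma> *\<^sub>R u + \<rho> *\<^sub>R v) x \<le> \<sigma> + \<rho>"
    using norm_triangle_ineq[of "\<sigma> *\<^sub>R u" "\<rho> *\<^sub>R v"] s1 nu nv by (simp add: dist_norm)
  then have p1: "dist (x + \<sigma> *\<^sub>R u + \<rho> *\<^sub>R v) x < d1" using s1 t_def d1 d2 by linarith
  have "dist (x + \<sigma>' *\<^sub>R v + \<rho>' *\<^sub>R u) x \<le> \<sigma>' + \<rho>'"
    using norm_triangle_ineq[of "\<sigma>' *\<^sub>R v" "\<rho>' *\<^sub>R u"] s2 nu nv by (simp add: dist_norm)
  then have p2: "dist (x + \<sigma>' *\<^sub>R v + \<rho>' *\<^sub>R u) x < d2" using s2 t_def d1 d2 by linarith
  have "dist (GA (x + \<sigma> *\<^sub>R u + \<rho> *\<^sub>R v) v) (GA x v) < e" using d1 p1 by blast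
  moreover have "dist (GB (x + \<sigma>' *\<^sub>R v + \<rho>' *\<^sub>R u) u) (GB x u) < e" using d2 p2 by blast
  ultimately show False using eq unfolding e_def dist_real_def by (simp add: abs_if split: if_splits)
qed

lemma smooth_sym:
  assumes "smooth_fun f" "b \<in> Basis" "c \<in> Basis"
  shows "frechet_derivative (\<lambda>y. frechet_derivative f (at y) b) (at x) c =
         frechet_derivative (\<lambda>y. frechet_derivative f (at y) c) (at x) b"
proof -
  have sb: "smooth_fun (\<lambda>y. frechet_derivative f (at y) b)" using smooth_pd assms by blast
  have sc: "smooth_fun (\<lambda>y. frechet_derivative f (at y) c)" using smooth_pd assms by blast
  have sbc: "smooth_fun (\<lambda>z. frechet_derivative (\<lambda>y. frechet_derivative f (at y) b) (at z) c)"
    using smooth_pd[OF sb assms(3)] .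
  have scb: "smooth_fun (\<lambda>z. frechet_derivative (\<lambda>y. frechet_derivative f (at y) c) (at z) b)"
    using smooth_pd[OF sc assms(2)] .
  show ?thesis
    apply (rule sym2[where f=f and F="\<lambda>y. frechet_derivative f (at y)"])
    using smooth_D[OF assms(1)] smooth_D[OF sb] smooth_D[OF sc]
      differentiable_imp_continuous_within[OF smooth_diff[OF sbc]]
      differentiable_imp_continuous_within[OF smooth_diff[OF scb]] assms(2,3)
    by auto
qed



lemma lin_expand:
  fixes L :: "'a::euclidean_space \<Rightarrow> real"
  assumes "linear L" shows "(\<Sum>b\<in>Basis. L b * (b \<bullet> v)) = L v"
proof -
  have "L v = L (\<Sum>b\<in>Basis. (v \<bullet> b) *\<^sub>R b)" by (simp add: euclidean_representation)
  also have "\<dots> = (\<Sum>b\<in>Basis. (v \<bullet> b) * L b)"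
    by (simp add: linear_sum[OF assms] linear_scale[OF assms])
  finally show ?thesis by (simp add: inner_commute mult.commute)
qed

lemma grad_inner:
  assumes "(k has_derivative L) (at x)" shows "grad k x \<bullet> w = L w"
proof -
  have "frechet_derivative k (at x) = L" using assms frechet_derivative_at by metis
  moreover have "linear L" using assms has_derivative_linear by blast
  ultimately show ?thesis unfolding grad_def
    by (simp add: inner_sum_left lin_expand)
qed

definition HG :: "('a::euclidean_space \<Rightarrow> real) \<Rightarrow> 'a \<Rightarrow> 'a \<Rightarrow> 'a" where
  "HG g x w = (\<Sum>b\<in>Basis. frechet_derivative (\<lambda>y. frechet_derivative g (at y) b) (at x) w *\<^sub>R b)"

lemma grad_has_derivative:
  assumes "smooth_fun g" shows "(grad g has_derivative HG g x) (at x)"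
proof -
  have "grad g = (\<lambda>y. \<Sum>b\<in>Basis. frechet_derivative g (at y) b *\<^sub>R b)"
    by (simp add: grad_def fun_eq_iff)
  moreover have "((\<lambda>y. \<Sum>b\<in>Basis. frechet_derivative g (at y) b *\<^sub>R b) has_derivative HG g x) (at x)"
    unfolding HG_def
    by (intro has_derivative_sum has_derivative_scaleR_left smooth_D smooth_pd assms)
  ultimately show ?thesis by simp
qed

lemma HG_sym:
  assumes "smooth_fun g" shows "u \<bullet> HG g x w = w \<bullet> HG g x u"
proof -
  define M where "M b c = frechet_derivative (\<lambda>y. frechet_derivative g (at y) b) (at x) c" for b c
  have lin: "linear (M b)" if "b \<in> Basis" for b
    unfolding M_def using has_derivative_linear smooth_D smooth_pd assms that by blast
  have sym: "M b c = M c b" if "b \<in> Basis" "c \<in> Basis" for b c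
    unfolding M_def using smooth_sym assms that by blast
  have e: "u \<bullet> HG g x w = (\<Sum>b\<in>Basis. \<Sum>c\<in>Basis. M b c * (c \<bullet> w) * (u \<bullet> b))" for u w
  proof -
    have "u \<bullet> HG g x w = (\<Sum>b\<in>Basis. M b w * (u \<bullet> b))"
      unfolding HG_def M_def[symmetric] by (simp add: inner_sum_right)
    also have "\<dots> = (\<Sum>b\<in>Basis. \<Sum>c\<in>Basis. M b c * (c \<bullet> w) * (u \<bullet> b))"
      by (rule sum.cong[OF refl]) (simp add: sum_distrib_right[symmetric] lin_expand[OF lin])
    finally show ?thesis .
  qed
  have "u \<bullet> HG g x w = (\<Sum>b\<in>Basis. \<Sum>c\<in>Basis. M b c * (c \<bullet> w) * (u \<bullet> b))" by (rule e)
  also have "\<dots> = (\<Sum>c\<in>Basis. \<Sum>b\<in>Basis. M b c * (c \<bullet> w) * (u \<bullet> b))" by (rule sum.swap)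
  also have "\<dots> = (\<Sum>c\<in>Basis. \<Sum>b\<in>Basis. M c b * (b \<bullet> u) * (w \<bullet> c))"
    by (intro sum.cong refl) (simp add: sym inner_commute)
  also have "\<dots> = w \<bullet> HG g x u" by (rule e[symmetric])
  finally show ?thesis .
qed

lemma lie_antisym: "lie_algebra B \<Longrightarrow> B v u = - B u v"
proof -
  assume l: "lie_algebra B"
  then have bl: "bilinear B" and z: "\<And>x. B x x = 0" by (auto simp: lie_algebra_def)
  have "B (u + v) (u + v) = B u u + B v u + (B u v + B v v)"
    by (simp only: bilinear_ladd[OF bl] bilinear_radd[OF bl])
  then have "B u v + B v u = 0" using z[of "u+v"] z[of u] z[of v] by (simp add: add.commute)
  then show ?thesis by (metis add_eq_0_iff)
qed

definition avec :: "('a::euclidean_space \<Rightarrow> 'a \<Rightarrow> 'a) \<Rightarrow> 'a \<Rightarrow> 'a \<Rightarrow> 'a" where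
  "avec B x u = (\<Sum>e\<in>Basis. (x \<bullet> B u e) *\<^sub>R e)"

lemma avec_inner: "bilinear B \<Longrightarrow> avec B x u \<bullet> v = x \<bullet> B u v"
proof -
  assume bl: "bilinear B"
  have lin: "linear (\<lambda>v. x \<bullet> B u v)"
    by (rule linearI) (simp_all add: bilinear_radd[OF bl] bilinear_rmul[OF bl] inner_add_right)
  show ?thesis unfolding avec_def using lin_expand[OF lin, of v]
    by (simp add: inner_sum_left)
qed

lemma br_deriv:
  assumes bl: "bilinear B" and g: "smooth_fun g" and h: "smooth_fun h"
  shows "((\<lambda>y. y \<bullet> B (grad g y) (grad h y)) has_derivative
     (\<lambda>w. x \<bullet> (B (grad g x) (HG h x w) + B (HG g x w) (grad h x)) + w \<bullet> B (grad g x) (grad h x))) (at x)"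
proof -
  have bb: "bounded_bilinear B" using bl bilinear_conv_bounded_bilinear by blast
  show ?thesis
    by (rule has_derivative_inner[OF has_derivative_ident bounded_bilinear.FDERIV[OF bb grad_has_derivative[OF g] grad_has_derivative[OF h]]])
qed

lemma pb_eq: "pbracket (lie_poisson B) f g x = x \<bullet> B (grad f x) (grad g x)"
  by (simp add: pbracket_def lie_poisson_def)

lemma jacobi_term:
  assumes la: "lie_algebra B" and f: "smooth_fun f" and g: "smooth_fun g" and h: "smooth_fun h"
  shows "pbracket (lie_poisson B) f (pbracket (lie_poisson B) g h) x =
     x \<bullet> B (grad f x) (B (grad g x) (grad h x)) + avec B x (grad g x) \<bullet> HG h x (avec B x (grad f x))
     - avec B x (grad h x) \<bullet> HG g x (avec B x (grad f x))"
proof -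
  have bl: "bilinear B" using la by (simp add: lie_algebra_def)
  let ?k = "\<lambda>y. y \<bullet> B (grad g y) (grad h y)"
  have kk: "pbracket (lie_poisson B) g h = ?k" by (simp add: fun_eq_iff pb_eq)
  let ?a = "avec B x (grad f x)"
  have "pbracket (lie_poisson B) f ?k x = ?a \<bullet> grad ?k x" by (simp add: pb_eq avec_inner[OF bl])
  also have "\<dots> = grad ?k x \<bullet> ?a" by (simp add: inner_commute)
  also have "\<dots> = x \<bullet> (B (grad g x) (HG h x ?a) + B (HG g x ?a) (grad h x)) + ?a \<bullet> B (grad g x) (grad h x)"
    by (rule grad_inner[OF br_deriv[OF bl g h]])
  also have "\<dots> = x \<bullet> B (grad g x) (HG h x ?a) - x \<bullet> B (grad h x) (HG g x ?a) + x \<bullet> B (grad f x) (B (grad g x) (grad h x))"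
    using lie_antisym[OF la, of "HG g x ?a" "grad h x"]
    by (simp add: avec_inner[OF bl] inner_add_right inner_diff_right)
  finally have X: "pbracket (lie_poisson B) f ?k x = x \<bullet> B (grad g x) (HG h x ?a) - x \<bullet> B (grad h x) (HG g x ?a) + x \<bullet> B (grad f x) (B (grad g x) (grad h x))" .
  have Y1: "avec B x (grad g x) \<bullet> HG h x ?a = x \<bullet> B (grad g x) (HG h x ?a)" by (rule avec_inner[OF bl])
  have Y2: "avec B x (grad h x) \<bullet> HG g x ?a = x \<bullet> B (grad h x) (HG g x ?a)" by (rule avec_inner[OF bl])
  show ?thesis unfolding kk X Y1 Y2 by simp
qed



lemma lie_poisson_structure:
  assumes la: "lie_algebra B"
  shows "poisson_structure (lie_poisson B)"
proof -
  have bl: "bilinear B" and jac: "\<And>x y z. B x (B y z) + B y (B z x) + B z (B x y) = 0"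
    using la by (auto simp: lie_algebra_def)
  have p1: "bilinear (lie_poisson B x) \<and> (\<forall>u v. lie_poisson B x u v = - lie_poisson B x v u)" for x
  proof -
    have l1: "linear (\<lambda>v. x \<bullet> B u v)" for u
      by (rule linearI) (simp_all add: bilinear_radd[OF bl] bilinear_rmul[OF bl] inner_add_right)
    have l2: "linear (\<lambda>u. x \<bullet> B u v)" for v
      by (rule linearI) (simp_all add: bilinear_ladd[OF bl] bilinear_lmul[OF bl] inner_add_right)
    have "bilinear (lie_poisson B x)" unfolding bilinear_def lie_poisson_def using l1 l2 by blast
    moreover have "lie_poisson B x u v = - lie_poisson B x v u" for u v
      unfolding lie_poisson_def using lie_antisym[OF la, of u v] by simp
    ultimately show ?thesis by blast
  qed
  have p2: "smooth_fun (pbracket (lie_poisson B) f g)" if f: "smooth_fun f" and g: "smooth_fun g" for f g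
  proof -
    have "pbracket (lie_poisson B) f g y = (\<Sum>p\<in>Basis \<times> Basis.
        (frechet_derivative f (at y) (fst p) * frechet_derivative g (at y) (snd p)) * (y \<bullet> B (fst p) (snd p)))" for y
    proof -
      have "pbracket (lie_poisson B) f g y = y \<bullet> (\<Sum>p\<in>Basis \<times> Basis.
          B (frechet_derivative f (at y) (fst p) *\<^sub>R fst p) (frechet_derivative g (at y) (snd p) *\<^sub>R snd p))"
        unfolding pb_eq grad_def bilinear_sum[OF bl] by (simp add: case_prod_beta)
      also have "\<dots> = (\<Sum>p\<in>Basis \<times> Basis.
          (frechet_derivative f (at y) (fst p) * frechet_derivative g (at y) (snd p)) * (y \<bullet> B (fst p) (snd p)))"
        unfolding inner_sum_right bilinear_lmul[OF bl] bilinear_rmul[OF bl] by (simp add: mult.assoc mult.left_commute)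
      finally show ?thesis .
    qed
    then have "pbracket (lie_poisson B) f g = (\<lambda>y. \<Sum>p\<in>Basis \<times> Basis.
        (frechet_derivative f (at y) (fst p) * frechet_derivative g (at y) (snd p)) * (y \<bullet> B (fst p) (snd p)))"
      by (simp add: fun_eq_iff)
    moreover have "G (\<lambda>y. \<Sum>p\<in>Basis \<times> Basis.
        (frechet_derivative f (at y) (fst p) * frechet_derivative g (at y) (snd p)) * (y \<bullet> B (fst p) (snd p)))"
      apply (rule G_sum)
       apply simp
      apply (rule G_mult)+
        apply (rule G_smooth, rule smooth_pd[OF f], force)
       apply (rule G_smooth, rule smooth_pd[OF g], force)
      apply (rule G_lin, rule linearI)
       apply (auto simp: inner_add_left)
      done
    ultimately show ?thesis using G_smooth_fun by simp
  qed
  have p3: "pbracket (lie_poisson B) f (pbracket (lie_poisson B) g h) x + pbracket (lie_poisson B) g (pbracket (lie_poisson B) h f) x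
              + pbracket (lie_poisson B) h (pbracket (lie_poisson B) f g) x = 0"
    if f: "smooth_fun f" and g: "smooth_fun g" and h: "smooth_fun h" for f g h x
  proof -
    have j: "x \<bullet> B (grad f x) (B (grad g x) (grad h x)) + x \<bullet> B (grad g x) (B (grad h x) (grad f x)) + x \<bullet> B (grad h x) (B (grad f x) (grad g x)) = 0"
      using jac[of "grad f x" "grad g x" "grad h x"] by (simp add: inner_add_right[symmetric])
    show ?thesis
      unfolding jacobi_term[OF la f g h] jacobi_term[OF la g h f] jacobi_term[OF la h f g]
      using j HG_sym[OF f, of "avec B x (grad h x)" x "avec B x (grad g x)"]
        HG_sym[OF g, of "avec B x (grad f x)" x "avec B x (grad h x)"]
        HG_sym[OF h, of "avec B x (grad g x)" x "avec B x (grad f x)"]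
      by linarith
  qed
  show ?thesis unfolding poisson_structure_def using p1 p2 p3 by blast
qed



lemmas bil_simps = bilinear_ladd bilinear_radd bilinear_lmul bilinear_rmul bilinear_lsub bilinear_rsub
  bilinear_lneg bilinear_rneg bilinear_lzero bilinear_rzero

lemma semidirect_lie:
  assumes cm: "crossed_module bh bg \<phi> \<rho>"
  shows "lie_algebra (semidirect_bracket bh bg \<rho>)"
proof -
  have lh: "lie_algebra bh" and lg: "lie_algebra bg" and bh: "bilinear bh" and bg: "bilinear bg"
    and br: "bilinear \<rho>"
    and rep: "\<And>x y a. \<rho> (bg x y) a = \<rho> x (\<rho> y a) - \<rho> y (\<rho> x a)"
    and der: "\<And>x a b. \<rho> x (bh a b) = bh (\<rho> x a) b + bh a (\<rho> x b)"
    using cm by (auto simp: crossed_module_def lie_algebra_def)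
  have jh: "\<And>x y z. bh x (bh y z) + bh y (bh z x) + bh z (bh x y) = 0"
    and jg: "\<And>x y z. bg x (bg y z) + bg y (bg z x) + bg z (bg x y) = 0"
    and zh: "\<And>x. bh x x = 0" and zg: "\<And>x. bg x x = 0"
    using lh lg by (auto simp: lie_algebra_def)
  let ?S = "semidirect_bracket bh bg \<rho>"
  have l1: "linear (?S u)" for u
    by (rule linearI) (auto simp: semidirect_bracket_def bil_simps[OF bh] bil_simps[OF bg] bil_simps[OF br] algebra_simps)
  have l2: "linear (\<lambda>u. ?S u v)" for v
    by (rule linearI) (auto simp: semidirect_bracket_def bil_simps[OF bh] bil_simps[OF bg] bil_simps[OF br] algebra_simps)
  have bs: "bilinear ?S" unfolding bilinear_def using l1 l2 by blast
  have zs: "?S u u = 0" for u by (simp add: semidirect_bracket_def zh zg zero_prod_def)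
  have js: "?S u (?S v w) + ?S v (?S w u) + ?S w (?S u v) = 0" for u v w
  proof -
    obtain a x where u: "u = (a, x)" by force
    obtain b y where v: "v = (b, y)" by force
    obtain c z where w: "w = (c, z)" by force
    have j1: "bh c (bh a b) = - bh a (bh b c) - bh b (bh c a)"
      using jh[of a b c] by (simp add: algebra_simps eq_neg_iff_add_eq_0)
    have j2: "bg z (bg x y) = - bg x (bg y z) - bg y (bg z x)"
      using jg[of x y z] by (simp add: algebra_simps eq_neg_iff_add_eq_0)
    have a1: "bh (\<rho> y c) a = - bh a (\<rho> y c)" using lie_antisym[OF lh] by blast
    have a2: "bh c (\<rho> x b) = - bh (\<rho> x b) c" using lie_antisym[OF lh] by blast
    have a3: "bh (\<rho> z a) b = - bh b (\<rho> z a)" using lie_antisym[OF lh] by blast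
    show ?thesis unfolding u v w
      by (simp add: semidirect_bracket_def bil_simps[OF bh] bil_simps[OF bg] bil_simps[OF br]
          rep der j1 j2 a1 a2 a3 zero_prod_def algebra_simps)
  qed
  show ?thesis unfolding lie_algebra_def using bs zs js by blast
qed



lemma final_comp:
  assumes cm: "crossed_module bh bg \<phi> \<rho>"
  shows "triple_bar_bivector (lie_poisson (semidirect_bracket bh bg \<rho>))
     ((\<alpha>, \<theta>), (\<alpha> - adjoint \<phi> \<theta>, \<theta>'), (\<alpha>, \<theta> + \<theta>'))
     ((a1, \<phi> a2 + x2), (a2, x2), (- a1 - a2, - x2))
     ((b1, \<phi> b2 + y2), (b2, y2), (- b1 - b2, - y2)) = 0"
proof -
  have lh: "lie_algebra bh" and lg: "lie_algebra bg" and bh: "bilinear bh" and bg: "bilinear bg"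
    and br: "bilinear \<rho>" and lp: "linear \<phi>"
    and hom: "\<And>a b. \<phi> (bh a b) = bg (\<phi> a) (\<phi> b)"
    and pr: "\<And>x a. \<phi> (\<rho> x a) = bg x (\<phi> a)"
    and rp: "\<And>a b. \<rho> (\<phi> a) b = bh a b"
    using cm by (auto simp: crossed_module_def lie_algebra_def)
  have ad: "adjoint \<phi> t \<bullet> z = t \<bullet> \<phi> z" for t z
    using adjoint_works[OF lp, of z t] by (simp add: inner_commute)
  have a1: "bh b2 a1 = - bh a1 b2" using lie_antisym[OF lh] by blast
  have a2: "bg y2 (\<phi> a2) = - bg (\<phi> a2) y2" using lie_antisym[OF lg] by blast
  show ?thesis
    by (simp add: triple_bar_bivector_def lie_poisson_def semidirect_bracket_def
        bil_simps[OF bh] bil_simps[OF bg] bil_simps[OF br] linear_add[OF lp] linear_diff[OF lp]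
        linear_neg[OF lp] hom pr rp ad a1 a2 inner_add_right inner_diff_right inner_add_left inner_diff_left
        algebra_simps)
qed



lemma vec_eq: fixes a b :: "'a::real_inner" assumes "\<And>w. a \<bullet> w = b \<bullet> w" shows "a = b"
proof -
  have "(a - b) \<bullet> (a - b) = 0" using assms[of "a - b"] by (simp add: inner_diff_left)
  then show ?thesis by simp
qed

lemma grad_add:
  assumes "(f has_derivative L) (at (fst z + snd z))"
  shows "grad (f \<circ> (\<lambda>pq. fst pq + snd pq)) z = (grad f (fst z + snd z), grad f (fst z + snd z))"
proof -
  have a: "((\<lambda>pq::'a\<times>'a. fst pq + snd pq) has_derivative (\<lambda>pq. fst pq + snd pq)) (at z)"
    by (auto intro!: derivative_eq_intros)
  have d: "((f \<circ> (\<lambda>pq. fst pq + snd pq)) has_derivative (L \<circ> (\<lambda>pq. fst pq + snd pq))) (at z)"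
    using diff_chain_at[OF a] assms by blast
  have lin: "linear L" using assms has_derivative_linear by blast
  show ?thesis
  proof (rule vec_eq)
    fix w :: "'a \<times> 'a"
    show "grad (f \<circ> (\<lambda>pq. fst pq + snd pq)) z \<bullet> w = (grad f (fst z + snd z), grad f (fst z + snd z)) \<bullet> w"
      using grad_inner[OF d, of w] grad_inner[OF assms, of "fst w"] grad_inner[OF assms, of "snd w"]
      by (cases w) (simp add: linear_add[OF lin])
  qed
qed

lemma poisson_add:
  assumes "bilinear B"
  shows "poisson_map (prod_bivector (lie_poisson B)) (lie_poisson B) (\<lambda>pq. fst pq + snd pq)"
  unfolding poisson_map_def
proof (intro allI impI)
  fix f g :: "'a \<Rightarrow> real" and x :: "'a \<times> 'a"
  assume "smooth_fun f \<and> smooth_fun g"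
  then have f: "smooth_fun f" and g: "smooth_fun g" by auto
  show "pbracket (prod_bivector (lie_poisson B)) (f \<circ> (\<lambda>pq. fst pq + snd pq)) (g \<circ> (\<lambda>pq. fst pq + snd pq)) x =
        pbracket (lie_poisson B) f g (fst x + snd x)"
    unfolding pbracket_def grad_add[OF smooth_D[OF f]] grad_add[OF smooth_D[OF g]]
    by (simp add: prod_bivector_def lie_poisson_def inner_add_left)
qed

lemma grad_orth:
  assumes f: "smooth_fun f" and z: "\<forall>c\<in>C. f c = 0" and c: "c \<in> C" and cl: "\<forall>t. c + t *\<^sub>R w \<in> C"
  shows "grad f c \<bullet> w = 0"
proof -
  have d: "((\<lambda>s. f (c + s *\<^sub>R w)) has_derivative (\<lambda>h. h * frechet_derivative f (at (c + 0 *\<^sub>R w)) w)) (at 0)"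
    by (rule path_deriv) (use smooth_D[OF f] in blast)
  have "(\<lambda>s. f (c + s *\<^sub>R w)) = (\<lambda>s. 0)" using z cl by auto
  then have d0: "((\<lambda>s. f (c + s *\<^sub>R w)) has_derivative (\<lambda>h. 0)) (at (0::real))" by simp
  have "(\<lambda>h. h * frechet_derivative f (at (c + 0 *\<^sub>R w)) w) = (\<lambda>h::real. 0)"
    using has_derivative_unique[OF d d0] .
  then have "frechet_derivative f (at c) w = 0" by (metis add.right_neutral mult_1 scale_zero_left)
  then show ?thesis using grad_inner[OF smooth_D[OF f]] by simp
qed



lemma lie2:
  fixes \<phi> :: "'h::euclidean_space \<Rightarrow> 'g::euclidean_space"
  assumes lp: "linear \<phi>"
  shows "linear_lie_2group
           (\<lambda>(\<alpha>, \<theta>). \<alpha> - adjoint \<phi> \<theta>)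
           (\<lambda>(\<alpha>, \<theta>). \<alpha>)
           (\<lambda>\<alpha>. (\<alpha>, 0))
           (\<lambda>(\<alpha>, \<theta>) (\<alpha>', \<theta>'). (\<alpha>, \<theta> + \<theta>'))
           (\<lambda>(\<alpha>, \<theta>). (\<alpha> - adjoint \<phi> \<theta>, - \<theta>))"
proof -
  have la: "linear (adjoint \<phi>)" using adjoint_linear[OF lp] .
  note L = linear_add[OF la] linear_diff[OF la] linear_neg[OF la] linear_0[OF la] linear_scale[OF la]
  show ?thesis
    unfolding linear_lie_2group_def
    apply (intro conjI)
                 apply (auto simp: L split_beta algebra_simps)[5]
            apply (rule linearI; auto simp: L split_beta algebra_simps)
           apply (rule linearI; auto simp: L split_beta algebra_simps)
          apply (rule linearI; auto simp: L split_beta algebra_simps)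
         apply (rule linearI; auto simp: L split_beta algebra_simps)
        apply (auto simp: surj_def L split_beta algebra_simps)
    done
qed



lemma annih:
  fixes \<phi> :: "'h::euclidean_space \<Rightarrow> 'g::euclidean_space"
  assumes lp: "linear \<phi>"
    and o: "\<And>\<alpha> \<theta> \<theta>'. u \<bullet> ((\<alpha>, \<theta>), (\<alpha> - adjoint \<phi> \<theta>, \<theta>'), (\<alpha>, \<theta> + \<theta>')) = 0"
  shows "\<exists>a1 a2 x2. u = ((a1, \<phi> a2 + x2), (a2, x2), (- a1 - a2, - x2))"
proof -
  have la: "linear (adjoint \<phi>)" using adjoint_linear[OF lp] .
  have ad: "adjoint \<phi> t \<bullet> z = t \<bullet> \<phi> z" for t z
    using adjoint_works[OF lp, of z t] by (simp add: inner_commute)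
  obtain a1 x1 a2 x2 a3 x3 where u: "u = ((a1, x1), (a2, x2), (a3, x3))" by (metis prod.collapse)
  have e1: "k \<bullet> (a1 + a2 + a3) = 0" for k
    using o[of k 0 0] by (simp add: u linear_0[OF la] inner_add_right inner_commute)
  have e2: "k \<bullet> (x1 - \<phi> a2 + x3) = 0" for k
  proof -
    have "k \<bullet> x1 + (k \<bullet> x3 - a2 \<bullet> adjoint \<phi> k) = 0"
      using o[of 0 k 0] by (simp add: u ad inner_add_right inner_diff_right inner_commute)
    moreover have "a2 \<bullet> adjoint \<phi> k = k \<bullet> \<phi> a2" using adjoint_works[OF lp, of a2 k] by (simp add: inner_commute)
    moreover have "k \<bullet> (x1 - \<phi> a2 + x3) = k \<bullet> x1 - k \<bullet> \<phi> a2 + k \<bullet> x3" by (simp add: inner_add_right inner_diff_right)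
    ultimately show ?thesis by linarith
  qed
  have e3: "k \<bullet> (x2 + x3) = 0" for k
    using o[of 0 0 k] by (simp add: u linear_0[OF la] inner_add_right inner_commute)
  have "a1 + a2 + a3 = 0" using e1[of "a1 + a2 + a3"] by simp
  then have h1: "a3 = - a1 - a2" by (simp add: algebra_simps eq_neg_iff_add_eq_0)
  have "x2 + x3 = 0" using e3[of "x2 + x3"] by simp
  then have h3: "x3 = - x2" by (simp add: algebra_simps eq_neg_iff_add_eq_0)
  have "x1 - \<phi> a2 + x3 = 0" using e2[of "x1 - \<phi> a2 + x3"] by simp
  then have h2: "x1 = \<phi> a2 + x2" using h3 by (simp add: algebra_simps)
  show ?thesis using u h1 h2 h3 by blast
qed

lemma Cchar:
  fixes \<phi> :: "'h::euclidean_space \<Rightarrow> 'g::euclidean_space"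
  shows "{(p, q, (\<lambda>(\<alpha>, \<theta>) (\<alpha>', \<theta>'). (\<alpha>, \<theta> + \<theta>')) p q) | p q.
            (\<lambda>(\<alpha>, \<theta>). \<alpha> - adjoint \<phi> \<theta>) p = (\<lambda>(\<alpha>, \<theta>). \<alpha>) q} =
         {((\<alpha>, \<theta>), (\<alpha> - adjoint \<phi> \<theta>, \<theta>'), (\<alpha>, \<theta> + \<theta>')) | \<alpha> \<theta> \<theta>'. True}"
  by (auto simp: split_beta)

lemma cois:
  fixes bh :: "'h::euclidean_space \<Rightarrow> 'h \<Rightarrow> 'h"
    and bg :: "'g::euclidean_space \<Rightarrow> 'g \<Rightarrow> 'g"
  assumes cm: "crossed_module bh bg \<phi> \<rho>"
  shows "coisotropic (triple_bar_bivector (lie_poisson (semidirect_bracket bh bg \<rho>)))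
     {((\<alpha>, \<theta>), (\<alpha> - adjoint \<phi> \<theta>, \<theta>'), (\<alpha>, \<theta> + \<theta>')) | \<alpha> \<theta> \<theta>'. True}"
  unfolding coisotropic_def
proof (intro allI impI ballI)
  let ?C = "{((\<alpha>, \<theta>), (\<alpha> - adjoint \<phi> \<theta>, \<theta>'), (\<alpha>, \<theta> + \<theta>')) | \<alpha> \<theta> \<theta>'. True}"
  have lp: "linear \<phi>" using cm by (simp add: crossed_module_def)
  have la: "linear (adjoint \<phi>)" using adjoint_linear[OF lp] .
  fix f g and c :: "('h \<times> 'g) \<times> ('h \<times> 'g) \<times> ('h \<times> 'g)"
  assume fg: "smooth_fun f \<and> smooth_fun g \<and> (\<forall>c\<in>?C. f c = 0) \<and> (\<forall>c\<in>?C. g c = 0)"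
    and c: "c \<in> ?C"
  have cl: "\<forall>t. c + t *\<^sub>R w \<in> ?C" if w: "w \<in> ?C" for w
  proof
    fix t :: real
    obtain \<alpha> \<theta> \<theta>' where c': "c = ((\<alpha>, \<theta>), (\<alpha> - adjoint \<phi> \<theta>, \<theta>'), (\<alpha>, \<theta> + \<theta>'))" using c by blast
    obtain \<beta> \<eta> \<eta>' where w': "w = ((\<beta>, \<eta>), (\<beta> - adjoint \<phi> \<eta>, \<eta>'), (\<beta>, \<eta> + \<eta>'))" using w by blast
    have "c + t *\<^sub>R w = ((\<alpha> + t *\<^sub>R \<beta>, \<theta> + t *\<^sub>R \<eta>), ((\<alpha> + t *\<^sub>R \<beta>) - adjoint \<phi> (\<theta> + t *\<^sub>R \<eta>), \<theta>' + t *\<^sub>R \<eta>'),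
        (\<alpha> + t *\<^sub>R \<beta>, (\<theta> + t *\<^sub>R \<eta>) + (\<theta>' + t *\<^sub>R \<eta>')))"
      by (simp add: c' w' linear_add[OF la] linear_scale[OF la] algebra_simps)
    then show "c + t *\<^sub>R w \<in> ?C" by blast
  qed
  have of: "grad f c \<bullet> w = 0" if "w \<in> ?C" for w
    using grad_orth[of f ?C c w] fg c cl that by blast
  have og: "grad g c \<bullet> w = 0" if "w \<in> ?C" for w
    using grad_orth[of g ?C c w] fg c cl that by blast
  obtain a1 a2 x2 where u: "grad f c = ((a1, \<phi> a2 + x2), (a2, x2), (- a1 - a2, - x2))"
    using annih[OF lp, of "grad f c"] of by blast
  obtain b1 b2 y2 where v: "grad g c = ((b1, \<phi> b2 + y2), (b2, y2), (- b1 - b2, - y2))"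
    using annih[OF lp, of "grad g c"] og by blast
  obtain \<alpha> \<theta> \<theta>' where c': "c = ((\<alpha>, \<theta>), (\<alpha> - adjoint \<phi> \<theta>, \<theta>'), (\<alpha>, \<theta> + \<theta>'))" using c by blast
  show "pbracket (triple_bar_bivector (lie_poisson (semidirect_bracket bh bg \<rho>))) f g c = 0"
    unfolding pbracket_def u v unfolding c' by (rule final_comp[OF cm])
qed

theorem mainTheorem5:
  fixes bh :: "'h::euclidean_space \<Rightarrow> 'h \<Rightarrow> 'h"
    and bg :: "'g::euclidean_space \<Rightarrow> 'g \<Rightarrow> 'g"
    and \<phi> :: "'h \<Rightarrow> 'g"
    and \<rho> :: "'g \<Rightarrow> 'h \<Rightarrow> 'h"
  assumes "crossed_module bh bg \<phi> \<rho>"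
  shows "linear_poisson_2group
           (\<lambda>(\<alpha>, \<theta>). \<alpha> - adjoint \<phi> \<theta>)
           (\<lambda>(\<alpha>, \<theta>). \<alpha>)
           (\<lambda>\<alpha>. (\<alpha>, 0))
           (\<lambda>(\<alpha>, \<theta>) (\<alpha>', \<theta>'). (\<alpha>, \<theta> + \<theta>'))
           (\<lambda>(\<alpha>, \<theta>). (\<alpha> - adjoint \<phi> \<theta>, - \<theta>))
           (lie_poisson (semidirect_bracket bh bg \<rho>))"
proof -
  have lp: "linear \<phi>" using assms by (simp add: crossed_module_def)
  have ls: "lie_algebra (semidirect_bracket bh bg \<rho>)" by (rule semidirect_lie[OF assms])
  then have bs: "bilinear (semidirect_bracket bh bg \<rho>)" by (simp add: lie_algebra_def)
  show ?thesis
    unfolding linear_poisson_2group_def Cchar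
    using lie2[OF lp] lie_poisson_structure[OF ls] cois[OF assms] poisson_add[OF bs]
    by blast
qed


end
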